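(* Let $C$ be a small category. If $f:X\to Y$ is an isomorphism in $Sd(C)$, then $X=Y$ and $f=\mathrm{id}_X$.
   Context: For $q\ge0$, $[q]=\{0<\dots<q\}$ viewed as a category. A $q$-simplex of the nerve $NC$ is a functor $X:[q]\to C$; $q_X=q$. It is non-degenerate if none of its arrows $X_{i-1}\to X_i$ is an identity. $\Delta/C$ has all simplices as objects and as morphisms $X\to Y$ the order-preserving $\xi:[q_X]\to[q_Y]$ with $Y\circ\xi=X$, written $\xi_*$. For a $q$-simplex $X$ and surjective order-preserving $s:[q+1]\to[q]$ with order-preserving right inverses $d,d'$, $d_*,d'_*:X\to X\circ s$ are elementary equivalent; $\sim$ is the smallest equivalence relation on morphisms of $\Delta/C$ compatible with composition containing these pairs; $[\Delta/C]$ is the quotient category (morphisms are classes $[\xi_*]$); $Sd(C)$ is the full subcategory of $[\Delta/C]$ on the non-degenerate simplices. *)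

theory Defs
  imports Main
begin

record ('o, 'a) category =
  Obj  :: "'o set"
  Arr  :: "'a set"
  Dom  :: "'a \<Rightarrow> 'o"
  Cod  :: "'a \<Rightarrow> 'o"
  Idt  :: "'o \<Rightarrow> 'a"
  Comp :: "'a \<Rightarrow> 'a \<Rightarrow> 'a"   (* Comp g f = g o f, defined when Cod f = Dom g *)

definition is_category :: "('o, 'a) category \<Rightarrow> bool" where
  "is_category C \<longleftrightarrow>
     (\<forall>f\<in>Arr C. Dom C f \<in> Obj C \<and> Cod C f \<in> Obj C) \<and>
     (\<forall>x\<in>Obj C. Idt C x \<in> Arr C \<and> Dom C (Idt C x) = x \<and> Cod C (Idt C x) = x) \<and>
     (\<forall>f\<in>Arr C. \<forall>g\<in>Arr C. Cod C f = Dom C g \<longrightarrow>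
         Comp C g f \<in> Arr C \<and> Dom C (Comp C g f) = Dom C f \<and> Cod C (Comp C g f) = Cod C g) \<and>
     (\<forall>f\<in>Arr C. Comp C (Idt C (Cod C f)) f = f \<and> Comp C f (Idt C (Dom C f)) = f) \<and>
     (\<forall>f\<in>Arr C. \<forall>g\<in>Arr C. \<forall>h\<in>Arr C. Cod C f = Dom C g \<longrightarrow> Cod C g = Dom C h \<longrightarrow>
         Comp C h (Comp C g f) = Comp C (Comp C h g) f)"

text \<open>A q-simplex is a functor from the poset category [q] = {0 < ... < q}:
  an object sob i for each i \<le> q and an arrow sar i j : sob i -> sob j for each i \<le> j \<le> q,
  functorially. Values outside the domain are fixed to undefined so that HOL equality
  is equality of functors.\<close>

record ('o, 'a) simplex =
  dim :: nat
  sob :: "nat \<Rightarrow> 'o"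
  sar :: "nat \<Rightarrow> nat \<Rightarrow> 'a"

definition is_simplex :: "('o, 'a) category \<Rightarrow> ('o, 'a) simplex \<Rightarrow> bool" where
  "is_simplex C X \<longleftrightarrow>
     (\<forall>i\<le>dim X. sob X i \<in> Obj C) \<and>
     (\<forall>i j. i \<le> j \<and> j \<le> dim X \<longrightarrow>
        sar X i j \<in> Arr C \<and> Dom C (sar X i j) = sob X i \<and> Cod C (sar X i j) = sob X j) \<and>
     (\<forall>i\<le>dim X. sar X i i = Idt C (sob X i)) \<and>
     (\<forall>i j k. i \<le> j \<and> j \<le> k \<and> k \<le> dim X \<longrightarrow> Comp C (sar X j k) (sar X i j) = sar X i k) \<and>
     (\<forall>i. dim X < i \<longrightarrow> sob X i = undefined) \<and>
     (\<forall>i j. \<not> (i \<le> j \<and> j \<le> dim X) \<longrightarrow> sar X i j = undefined)"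

definition nondeg :: "('o, 'a) category \<Rightarrow> ('o, 'a) simplex \<Rightarrow> bool" where
  "nondeg C X \<longleftrightarrow> is_simplex C X \<and>
     (\<forall>i. 1 \<le> i \<and> i \<le> dim X \<longrightarrow> \<not> (\<exists>x\<in>Obj C. sar X (i - 1) i = Idt C x))"

definition mono_map :: "nat \<Rightarrow> nat \<Rightarrow> (nat \<Rightarrow> nat) \<Rightarrow> bool" where
  "mono_map p q \<xi> \<longleftrightarrow> (\<forall>i\<le>p. \<xi> i \<le> q) \<and> (\<forall>i j. i \<le> j \<and> j \<le> p \<longrightarrow> \<xi> i \<le> \<xi> j) \<and>
     (\<forall>i. p < i \<longrightarrow> \<xi> i = undefined)"

definition precomp :: "('o, 'a) simplex \<Rightarrow> nat \<Rightarrow> (nat \<Rightarrow> nat) \<Rightarrow> ('o, 'a) simplex" where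
  "precomp Y p \<xi> = \<lparr> dim = p,
      sob = (\<lambda>i. if i \<le> p then sob Y (\<xi> i) else undefined),
      sar = (\<lambda>i j. if i \<le> j \<and> j \<le> p then sar Y (\<xi> i) (\<xi> j) else undefined) \<rparr>"

text \<open>A morphism \<xi>_* : X -> Y is represented by the triple (X, \<xi>, Y).\<close>

type_synonym ('o, 'a) dmor = "('o, 'a) simplex \<times> (nat \<Rightarrow> nat) \<times> ('o, 'a) simplex"

definition dsrc :: "('o, 'a) dmor \<Rightarrow> ('o, 'a) simplex" where
  "dsrc f = fst f"

definition dtgt :: "('o, 'a) dmor \<Rightarrow> ('o, 'a) simplex" where
  "dtgt f = snd (snd f)"

definition dmap :: "('o, 'a) dmor \<Rightarrow> nat \<Rightarrow> nat" where
  "dmap f = fst (snd f)"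

definition is_dmor :: "('o, 'a) category \<Rightarrow> ('o, 'a) dmor \<Rightarrow> bool" where
  "is_dmor C f \<longleftrightarrow> is_simplex C (dsrc f) \<and> is_simplex C (dtgt f) \<and>
     mono_map (dim (dsrc f)) (dim (dtgt f)) (dmap f) \<and>
     precomp (dtgt f) (dim (dsrc f)) (dmap f) = dsrc f"

definition dcomp :: "('o, 'a) dmor \<Rightarrow> ('o, 'a) dmor \<Rightarrow> ('o, 'a) dmor" where
  "dcomp g f = (dsrc f, (\<lambda>i. if i \<le> dim (dsrc f) then dmap g (dmap f i) else undefined), dtgt g)"

definition did :: "('o, 'a) simplex \<Rightarrow> ('o, 'a) dmor" where
  "did X = (X, (\<lambda>i. if i \<le> dim X then i else undefined), X)"

inductive dsim :: "('o, 'a) category \<Rightarrow> ('o, 'a) dmor \<Rightarrow> ('o, 'a) dmor \<Rightarrow> bool" for C where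
  elem: "\<lbrakk> is_simplex C X;
           mono_map (Suc (dim X)) (dim X) s; s ` {..Suc (dim X)} = {..dim X};
           mono_map (dim X) (Suc (dim X)) d; \<forall>i\<le>dim X. s (d i) = i;
           mono_map (dim X) (Suc (dim X)) d'; \<forall>i\<le>dim X. s (d' i) = i \<rbrakk>
         \<Longrightarrow> dsim C (X, d, precomp X (Suc (dim X)) s) (X, d', precomp X (Suc (dim X)) s)"
| refl: "is_dmor C f \<Longrightarrow> dsim C f f"
| sym: "dsim C f g \<Longrightarrow> dsim C g f"
| trans: "dsim C f g \<Longrightarrow> dsim C g h \<Longrightarrow> dsim C f h"
| comp: "\<lbrakk> dsim C f f'; dsim C g g'; is_dmor C f; is_dmor C f'; is_dmor C g; is_dmor C g';
           dtgt f = dsrc g; dtgt f' = dsrc g' \<rbrakk> \<Longrightarrow> dsim C (dcomp g f) (dcomp g' f')"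

definition qcls :: "('o, 'a) category \<Rightarrow> ('o, 'a) dmor \<Rightarrow> ('o, 'a) dmor set" where
  "qcls C f = {g. dsim C g f}"

definition qhom :: "('o, 'a) category \<Rightarrow> ('o, 'a) simplex \<Rightarrow> ('o, 'a) simplex \<Rightarrow> ('o, 'a) dmor set set" where
  "qhom C X Y = {qcls C f | f. is_dmor C f \<and> dsrc f = X \<and> dtgt f = Y}"

definition qcomp :: "('o, 'a) category \<Rightarrow> ('o, 'a) dmor set \<Rightarrow> ('o, 'a) dmor set \<Rightarrow> ('o, 'a) dmor set" where
  "qcomp C G F = qcls C (dcomp (SOME g. g \<in> G) (SOME f. f \<in> F))"

definition qid :: "('o, 'a) category \<Rightarrow> ('o, 'a) simplex \<Rightarrow> ('o, 'a) dmor set" where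
  "qid C X = qcls C (did X)"

definition sd_hom :: "('o, 'a) category \<Rightarrow> ('o, 'a) simplex \<Rightarrow> ('o, 'a) simplex \<Rightarrow> ('o, 'a) dmor set set" where
  "sd_hom C X Y = (if nondeg C X \<and> nondeg C Y then qhom C X Y else {})"

definition sd_iso :: "('o, 'a) category \<Rightarrow> ('o, 'a) simplex \<Rightarrow> ('o, 'a) simplex \<Rightarrow> ('o, 'a) dmor set \<Rightarrow> bool" where
  "sd_iso C X Y F \<longleftrightarrow> nondeg C X \<and> nondeg C Y \<and> F \<in> sd_hom C X Y \<and>
     (\<exists>G\<in>sd_hom C Y X. qcomp C G F = qid C X \<and> qcomp C F G = qid C Y)"

end

theory Submission
  imports Defs
begin

lemma consec:
  assumes "is_dmor C f" "nondeg C (dsrc f)" "1 \<le> j" "j \<le> dim (dsrc f)"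
  shows "dmap f (j - 1) < dmap f j"
proof -
  let ?X = "dsrc f" and ?Y = "dtgt f" and ?x = "dmap f" and ?p = "dim (dsrc f)"
  have mm: "mono_map ?p (dim ?Y) ?x" and pc: "precomp ?Y ?p ?x = ?X" and sY: "is_simplex C ?Y"
    using assms(1) by (auto simp: is_dmor_def)
  have le: "?x (j-1) \<le> ?x j" using mm assms(4) by (auto simp: mono_map_def)
  have jq: "?x j \<le> dim ?Y" using mm assms(4) by (auto simp: mono_map_def)
  have "sar ?X (j-1) j = sar (precomp ?Y ?p ?x) (j-1) j" by (simp only: pc)
  then have sarX: "sar ?X (j-1) j = sar ?Y (?x (j-1)) (?x j)"
    using assms(4) by (simp add: precomp_def)
  show ?thesis
  proof (rule ccontr)
    assume "\<not> ?thesis"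
    then have eq: "?x (j-1) = ?x j" using le by simp
    have "sar ?X (j-1) j = Idt C (sob ?Y (?x j))" using sarX eq sY jq
      by (simp add: is_simplex_def)
    moreover have "sob ?Y (?x j) \<in> Obj C" using sY jq by (simp add: is_simplex_def)
    ultimately show False using assms(2,3,4) by (auto simp: nondeg_def)
  qed
qed

lemma ge_self:
  assumes "is_dmor C f" "nondeg C (dsrc f)"
  shows "i \<le> dim (dsrc f) \<Longrightarrow> i \<le> dmap f i"
proof (induction i)
  case 0 then show ?case by simp
next
  case (Suc i)
  have "dmap f (Suc i - 1) < dmap f (Suc i)"
    by (rule consec[OF assms]) (use Suc in auto)
  then show ?case using Suc by simp
qed

lemma dim_le:
  assumes "is_dmor C f" "nondeg C (dsrc f)"
  shows "dim (dsrc f) \<le> dim (dtgt f)"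
proof -
  have "dim (dsrc f) \<le> dmap f (dim (dsrc f))" using ge_self[OF assms] by simp
  moreover have "dmap f (dim (dsrc f)) \<le> dim (dtgt f)"
    using assms(1) by (auto simp: is_dmor_def mono_map_def)
  ultimately show ?thesis by simp
qed

lemma le_top:
  assumes "is_dmor C f" "nondeg C (dsrc f)" "dim (dsrc f) = dim (dtgt f)"
  shows "k = dim (dsrc f) - i \<Longrightarrow> i \<le> dim (dsrc f) \<Longrightarrow> dmap f i + (dim (dsrc f) - i) \<le> dim (dsrc f)"
proof (induction k arbitrary: i)
  case 0
  then have "i = dim (dsrc f)" by simp
  then show ?case using assms by (auto simp: is_dmor_def mono_map_def)
next
  case (Suc k)
  have ip: "i < dim (dsrc f)" using Suc.prems by simp
  have "dmap f (Suc i - 1) < dmap f (Suc i)"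
    by (rule consec[OF assms(1,2)]) (use ip in auto)
  moreover have "dmap f (Suc i) + (dim (dsrc f) - Suc i) \<le> dim (dsrc f)"
    using Suc.IH[of "Suc i"] Suc.prems ip by simp
  ultimately show ?case using ip by simp
qed

lemma is_id:
  assumes "is_dmor C f" "nondeg C (dsrc f)" "dim (dsrc f) = dim (dtgt f)"
  shows "dsrc f = dtgt f \<and> f = did (dsrc f)"
proof -
  let ?X = "dsrc f" and ?Y = "dtgt f" and ?x = "dmap f" and ?p = "dim (dsrc f)"
  have xi: "\<And>i. i \<le> ?p \<Longrightarrow> ?x i = i"
  proof -
    fix i assume i: "i \<le> ?p"
    have "i \<le> ?x i" using ge_self[OF assms(1,2) i] .
    moreover have "?x i + (?p - i) \<le> ?p" using le_top[OF assms HOL.refl i] .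
    ultimately show "?x i = i" using i by simp
  qed
  have mm: "mono_map ?p (dim ?Y) ?x" and pc: "precomp ?Y ?p ?x = ?X" and sY: "is_simplex C ?Y"
    using assms(1) by (auto simp: is_dmor_def)
  have xe: "?x = (\<lambda>i. if i \<le> ?p then i else undefined)"
    using xi mm by (auto simp: mono_map_def)
  have XY: "?X = ?Y"
  proof -
    have "precomp ?Y ?p ?x = ?Y"
      using sY assms(3) xi
      by (intro simplex.equality) (auto simp: precomp_def is_simplex_def intro!: ext)
    then show ?thesis using pc by simp
  qed
  have "f = (?X, ?x, ?Y)" by (simp add: dsrc_def dtgt_def dmap_def)
  then have "f = did ?X" using XY xe by (simp add: did_def)
  then show ?thesis using XY by simp
qed

theorem corollary20:
  fixes C :: "('o, 'a) category"
    and X Y :: "('o, 'a) simplex"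
    and F :: "('o, 'a) dmor set"
  assumes "is_category C"
    and "sd_iso C X Y F"
  shows "X = Y \<and> F = qid C X"
proof -
  have nX: "nondeg C X" and nY: "nondeg C Y" and FH: "F \<in> sd_hom C X Y"
    and G: "\<exists>G\<in>sd_hom C Y X. True"
    using assms(2) by (auto simp: sd_iso_def)
  obtain f where f: "F = qcls C f" "is_dmor C f" "dsrc f = X" "dtgt f = Y"
    using FH nX nY by (auto simp: sd_hom_def qhom_def)
  obtain g where g: "is_dmor C g" "dsrc g = Y" "dtgt g = X"
    using G nX nY by (auto simp: sd_hom_def qhom_def)
  have "dim X \<le> dim Y" using dim_le[of C f] f nX by simp
  moreover have "dim Y \<le> dim X" using dim_le[of C g] g nY by simp
  ultimately have "dim (dsrc f) = dim (dtgt f)" using f by simp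
  then have "dsrc f = dtgt f \<and> f = did (dsrc f)" using is_id[of C f] f nX by simp
  then show ?thesis using f by (simp add: qid_def)
qed

end
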